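(* Let $G$ be a group and let $S \subset F$ be a set of weak identities in $G$. Then the $T$-subgroup $\langle S\rangle_T$ generated by $S$ is also a set of weak identities in $G$.
   Context: Let $F$ be the free group on countably many generators $g_1,g_2,\dots$. For $N\ge 1$, $F^{\times N}$ denotes the direct product of $N$ copies of $F$ and $i_k: F\to F^{\times N}$ the inclusion as the $k$-th factor. A subset $S\subset F$ is a set of weak identities in a group $G$ if there exists an integer $N\ge1$ such that for any elements $s_1,\dots,s_N\in S$ and any homomorphism $\rho: F^{\times N}\to G$ there is an index $k\in\{1,\dots,N\}$ with $\rho(i_k(s_k))=1$. A $T$-subgroup (verbal subgroup) of $F$ is a subgroup preserved by all endomorphisms of $F$; for $S\subset F$, $\langle S\rangle_T$ denotes the smallest $T$-subgroup of $F$ containing $S$. *)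

theory Defs
  imports "HOL-Algebra.Algebra"
begin

text \<open>Free group F on countably many generators g_1, g_2, ... (indexed by nat).
  Elements are freely reduced words; a letter (n, True) is g_n, (n, False) is g_n^-1.\<close>

type_synonym fword = "(nat \<times> bool) list"

fun freduce :: "fword \<Rightarrow> fword" where
  "freduce [] = []"
| "freduce (x # xs) =
     (case freduce xs of
        [] \<Rightarrow> [x]
      | y # ys \<Rightarrow> (if fst x = fst y \<and> snd x \<noteq> snd y then ys else x # y # ys))"

definition freduced :: "fword \<Rightarrow> bool" where
  "freduced w \<longleftrightarrow> (\<forall>i. Suc i < length w \<longrightarrow>
      \<not> (fst (w ! i) = fst (w ! Suc i) \<and> snd (w ! i) \<noteq> snd (w ! Suc i)))"

definition freeF :: "fword monoid" where
  "freeF = \<lparr>carrier = {w. freduced w}, monoid.mult = (\<lambda>x y. freduce (x @ y)), one = []\<rparr>"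

definition freeF_pow :: "nat \<Rightarrow> (nat \<Rightarrow> fword) monoid" where
  "freeF_pow N = product_group {1..N} (\<lambda>_. freeF)"

definition freeF_incl :: "nat \<Rightarrow> nat \<Rightarrow> fword \<Rightarrow> (nat \<Rightarrow> fword)" where
  "freeF_incl N k x = (\<lambda>j\<in>{1..N}. if j = k then x else [])"

definition weak_identities :: "fword set \<Rightarrow> ('g, 'b) monoid_scheme \<Rightarrow> bool" where
  "weak_identities S G \<longleftrightarrow> S \<subseteq> carrier freeF \<and>
     (\<exists>N::nat. N \<ge> 1 \<and>
       (\<forall>s::nat \<Rightarrow> fword. (\<forall>k\<in>{1..N}. s k \<in> S) \<longrightarrow>
         (\<forall>\<rho> \<in> hom (freeF_pow N) G.
            \<exists>k\<in>{1..N}. \<rho> (freeF_incl N k (s k)) = \<one>\<^bsub>G\<^esub>)))"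

definition T_subgroup :: "fword set \<Rightarrow> bool" where
  "T_subgroup H \<longleftrightarrow> subgroup H freeF \<and> (\<forall>\<phi> \<in> hom freeF freeF. \<phi> ` H \<subseteq> H)"

definition T_generated :: "fword set \<Rightarrow> fword set" where
  "T_generated S = \<Inter> {H. T_subgroup H \<and> S \<subseteq> H}"

end

theory Submission
  imports Defs
begin

definition cc :: "nat \<times> bool \<Rightarrow> fword \<Rightarrow> fword" where
  "cc x ys = (case ys of [] \<Rightarrow> [x] | y # ys' \<Rightarrow> (if fst x = fst y \<and> snd x \<noteq> snd y then ys' else x # y # ys'))"

lemma freduce_cc: "freduce (x # xs) = cc x (freduce xs)"
  by (simp add: cc_def)

lemma freduce_foldr: "freduce xs = foldr cc xs []"
  by (induction xs) (simp, simp del: freduce.simps add: freduce_cc)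

lemma freduce_append: "freduce (xs @ ys) = foldr cc xs (freduce ys)"
  by (induction xs) (simp, simp del: freduce.simps add: freduce_cc)

lemma freduced_Cons: "freduced (x # xs) \<longleftrightarrow> freduced xs \<and> (case xs of [] \<Rightarrow> True | y # _ \<Rightarrow> \<not> (fst x = fst y \<and> snd x \<noteq> snd y))"
  unfolding freduced_def
  apply (cases xs)
   apply simp
  apply (auto simp: nth_Cons split: nat.splits)
  done

lemma freduced_tl: "freduced (x # xs) \<Longrightarrow> freduced xs"
  by (simp add: freduced_Cons)

lemma cc_reduced: "freduced (cc x ys)" if "freduced ys"
proof (cases ys)
  case Nil then show ?thesis by (simp add: cc_def freduced_def)
next
  case (Cons y ys')
  show ?thesis
  proof (cases "fst x = fst y \<and> snd x \<noteq> snd y")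
    case True then show ?thesis using Cons that freduced_tl by (simp add: cc_def)
  next
    case False
    have "freduced (x # y # ys')" using False Cons that by (subst freduced_Cons) simp
    moreover have "cc x ys = x # y # ys'" using False Cons by (simp add: cc_def)
    ultimately show ?thesis by simp
  qed
qed

lemma foldr_cc_reduced: "freduced z \<Longrightarrow> freduced (foldr cc xs z)"
  by (induction xs) (simp_all add: cc_reduced)

lemma freduced_nil: "freduced []" by (simp add: freduced_def)

lemma freduce_reduced: "freduced (freduce xs)"
  by (simp add: freduce_foldr foldr_cc_reduced freduced_nil)

lemma freduce_id: "freduced xs \<Longrightarrow> freduce xs = xs"
proof (induction xs)
  case Nil then show ?case by simp
next
  case (Cons x xs)
  have r: "freduce xs = xs" using Cons freduced_tl by blast
  show ?case
  proof (cases xs)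
    case Nil then show ?thesis by simp
  next
    case (Cons y ys)
    have "\<not> (fst x = fst y \<and> snd x \<noteq> snd y)" using Cons.prems Cons freduced_Cons[of x xs] by simp
    then show ?thesis using r Cons by (simp del: freduce.simps add: freduce_cc cc_def)
  qed
qed

lemma cc_cancel:
  assumes "fst x = fst y" "snd x \<noteq> snd y" "freduced w"
  shows "cc x (cc y w) = w"
proof (cases w)
  case Nil then show ?thesis using assms by (simp add: cc_def)
next
  case (Cons u w')
  show ?thesis
  proof (cases "fst y = fst u \<and> snd y \<noteq> snd u")
    case True
    hence xu: "x = u" using assms by (cases x; cases u) auto
    have c1: "cc y w = w'" using True Cons by (simp add: cc_def)
    show ?thesis
    proof (cases w')
      case Nil then show ?thesis using c1 xu Cons by (simp add: cc_def)
    next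
      case (Cons v w'')
      have "\<not> (fst u = fst v \<and> snd u \<noteq> snd v)"
        using assms(3) \<open>w = u # w'\<close> Cons freduced_Cons[of u w'] by simp
      then show ?thesis using c1 xu Cons \<open>w = u # w'\<close> by (simp add: cc_def)
    qed
  next
    case False
    have c1: "cc y w = y # w" using False Cons by (simp add: cc_def)
    show ?thesis using c1 assms by (simp add: cc_def)
  qed
qed

lemma foldr_freduce:
  "freduced z \<Longrightarrow> foldr cc xs z = foldr cc (freduce xs) z"
proof (induction xs)
  case Nil then show ?case by simp
next
  case (Cons x xs)
  show ?case
  proof (cases "freduce xs")
    case Nil then show ?thesis using Cons by (simp add: freduce_cc cc_def)
  next
    fix y r assume Cons2: "freduce xs = y # r"
    show ?thesis
    proof (cases "fst x = fst y \<and> snd x \<noteq> snd y")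
      case True
      have "foldr cc (x # xs) z = cc x (cc y (foldr cc r z))"
        using Cons Cons2 by (simp del: freduce.simps)
      also have "\<dots> = foldr cc r z"
        using True Cons.prems by (intro cc_cancel) (auto intro: foldr_cc_reduced)
      moreover have "freduce (x # xs) = r" using True Cons2 by (simp del: freduce.simps add: freduce_cc cc_def)
      ultimately show ?thesis by simp
    next
      case False
      hence "freduce (x # xs) = x # y # r" using Cons2 by (simp del: freduce.simps add: freduce_cc cc_def)
      then show ?thesis using Cons Cons2 by simp
    qed
  qed
qed

lemma freduce_left: "freduce (freduce xs @ ys) = freduce (xs @ ys)"
  by (simp add: freduce_append foldr_freduce[symmetric] freduce_reduced)

lemma freduce_right: "freduce (xs @ freduce ys) = freduce (xs @ ys)"
  by (simp add: freduce_append freduce_id freduce_reduced)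

definition finv :: "fword \<Rightarrow> fword" where
  "finv w = map (\<lambda>(n,b). (n, \<not> b)) (rev w)"

lemma finv_cancel: "freduced z \<Longrightarrow> foldr cc (finv w @ w) z = z"
proof (induction w arbitrary: z)
  case Nil then show ?case by (simp add: finv_def)
next
  case (Cons a w)
  have "foldr cc (finv (a # w) @ a # w) z
      = foldr cc (finv w) (cc (fst a, \<not> snd a) (cc a (foldr cc w z)))"
    by (simp add: finv_def split_beta)
  also have "\<dots> = foldr cc (finv w) (foldr cc w z)"
    using Cons.prems by (subst cc_cancel) (auto intro: foldr_cc_reduced)
  also have "\<dots> = z" using Cons by simp
  finally show ?case .
qed


lemma freeF_group: "group freeF"
proof (rule groupI)
  fix x assume "x \<in> carrier freeF"
  hence x: "freduced x" by (simp add: freeF_def)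
  show "\<exists>y\<in>carrier freeF. y \<otimes>\<^bsub>freeF\<^esub> x = \<one>\<^bsub>freeF\<^esub>"
  proof (intro bexI)
    have "freduce (finv x @ x) = []"
      using finv_cancel[of "[]" x] by (simp add: freduce_append freduced_nil freduce_foldr[symmetric])
    thus "freduce (finv x) \<otimes>\<^bsub>freeF\<^esub> x = \<one>\<^bsub>freeF\<^esub>"
      by (simp add: freeF_def freduce_left)
    show "freduce (finv x) \<in> carrier freeF" by (simp add: freeF_def freduce_reduced)
  qed
next
  fix x y assume "x \<in> carrier freeF" "y \<in> carrier freeF"
  show "x \<otimes>\<^bsub>freeF\<^esub> y \<in> carrier freeF" by (simp add: freeF_def freduce_reduced)
next
  show "\<one>\<^bsub>freeF\<^esub> \<in> carrier freeF" by (simp add: freeF_def freduced_nil)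
next
  fix x y z
  have "freduce (freduce (x @ y) @ z) = freduce (x @ freduce (y @ z))"
    by (simp add: freduce_left freduce_right)
  thus "x \<otimes>\<^bsub>freeF\<^esub> y \<otimes>\<^bsub>freeF\<^esub> z = x \<otimes>\<^bsub>freeF\<^esub> (y \<otimes>\<^bsub>freeF\<^esub> z)"
    by (simp add: freeF_def)
next
  fix x assume "x \<in> carrier freeF"
  thus "\<one>\<^bsub>freeF\<^esub> \<otimes>\<^bsub>freeF\<^esub> x = x" by (simp add: freeF_def freduce_id)
qed


lemma one_freeF [simp]: "\<one>\<^bsub>freeF\<^esub> = []" by (simp add: freeF_def)
lemma mult_freeF: "x \<otimes>\<^bsub>freeF\<^esub> y = freduce (x @ y)" by (simp add: freeF_def)
lemma nil_carrier [simp]: "[] \<in> carrier freeF" by (simp add: freeF_def freduced_nil)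

lemma freeF_pow_group: "group (freeF_pow N)"
  unfolding freeF_pow_def by (simp add: freeF_group)

lemma incl_hom:
  assumes k: "k \<in> {1..N}"
  shows "freeF_incl N k \<in> hom freeF (freeF_pow N)"
proof (rule homI)
  fix x assume "x \<in> carrier freeF"
  thus "freeF_incl N k x \<in> carrier (freeF_pow N)"
    by (auto simp: freeF_pow_def freeF_incl_def PiE_def)
next
  fix x y assume "x \<in> carrier freeF" "y \<in> carrier freeF"
  have "freduce ([] @ []) = []" by simp
  thus "freeF_incl N k (x \<otimes>\<^bsub>freeF\<^esub> y) = freeF_incl N k x \<otimes>\<^bsub>freeF_pow N\<^esub> freeF_incl N k y"
    by (auto simp: freeF_pow_def freeF_incl_def mult_freeF fun_eq_iff simp del: freduce.simps)
qed

lemma hom_freeF_one: "\<phi> \<in> hom freeF freeF \<Longrightarrow> \<phi> [] = []"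
  using hom_one[of \<phi> freeF freeF] freeF_group by simp

lemma Phi_hom:
  assumes "\<And>j. j \<in> {1..N} \<Longrightarrow> \<phi> j \<in> hom freeF freeF"
  shows "(\<lambda>f. \<lambda>j\<in>{1..N}. \<phi> j (f j)) \<in> hom (freeF_pow N) (freeF_pow N)"
proof (rule homI)
  fix x assume "x \<in> carrier (freeF_pow N)"
  thus "(\<lambda>j\<in>{1..N}. \<phi> j (x j)) \<in> carrier (freeF_pow N)"
    using assms by (auto simp: freeF_pow_def PiE_def Pi_def intro: hom_in_carrier)
next
  fix x y assume xy: "x \<in> carrier (freeF_pow N)" "y \<in> carrier (freeF_pow N)"
  show "(\<lambda>j\<in>{1..N}. \<phi> j ((x \<otimes>\<^bsub>freeF_pow N\<^esub> y) j)) =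
        (\<lambda>j\<in>{1..N}. \<phi> j (x j)) \<otimes>\<^bsub>freeF_pow N\<^esub> (\<lambda>j\<in>{1..N}. \<phi> j (y j))"
  proof (rule ext)
    fix j show "(\<lambda>j\<in>{1..N}. \<phi> j ((x \<otimes>\<^bsub>freeF_pow N\<^esub> y) j)) j =
        ((\<lambda>j\<in>{1..N}. \<phi> j (x j)) \<otimes>\<^bsub>freeF_pow N\<^esub> (\<lambda>j\<in>{1..N}. \<phi> j (y j))) j"
    proof (cases "j \<in> {1..N}")
      case True
      have "x j \<in> carrier freeF" "y j \<in> carrier freeF" using xy True by (auto simp: freeF_pow_def)
      then show ?thesis using True assms[OF True] by (simp add: freeF_pow_def hom_mult)
    next
      case False then show ?thesis by (auto simp: freeF_pow_def)
    qed
  qed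
qed

lemma Phi_incl:
  assumes "\<And>j. j \<in> {1..N} \<Longrightarrow> \<phi> j \<in> hom freeF freeF" "k \<in> {1..N}"
  shows "(\<lambda>j\<in>{1..N}. \<phi> j (freeF_incl N k x j)) = freeF_incl N k (\<phi> k x)"
  using assms hom_freeF_one by (auto simp: freeF_incl_def fun_eq_iff)

lemma hh:
  assumes "group G" "\<rho> \<in> hom (freeF_pow N) G" "k \<in> {1..N}" "\<phi> \<in> hom freeF freeF"
  shows "group_hom freeF G (\<lambda>x. \<rho> (freeF_incl N k (\<phi> x)))"
proof -
  have "(\<rho> \<circ> freeF_incl N k) \<circ> \<phi> \<in> hom freeF G"
    using assms incl_hom hom_compose by metis
  thus ?thesis using assms freeF_group unfolding group_hom_def group_hom_axioms_def by (simp add: comp_def)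
qed

lemma id_hom: "(\<lambda>x. x) \<in> hom freeF freeF"
  by (rule homI) auto

lemma comp_hom: "\<phi> \<in> hom freeF freeF \<Longrightarrow> \<psi> \<in> hom freeF freeF \<Longrightarrow> (\<lambda>x. \<phi> (\<psi> x)) \<in> hom freeF freeF"
  using hom_compose[of \<psi> freeF freeF \<phi> freeF] by (simp add: comp_def)

theorem theorem2p5:
  fixes G :: "('g, 'b) monoid_scheme" and S :: "fword set"
  assumes "group G"
    and "weak_identities S G"
  shows "weak_identities (T_generated S) G"
proof -
  from assms(2) obtain N where SF: "S \<subseteq> carrier freeF" and N: "N \<ge> 1" and
    W: "\<forall>s::nat \<Rightarrow> fword. (\<forall>k\<in>{1..N}. s k \<in> S) \<longrightarrow>
         (\<forall>\<rho> \<in> hom (freeF_pow N) G. \<exists>k\<in>{1..N}. \<rho> (freeF_incl N k (s k)) = \<one>\<^bsub>G\<^esub>)"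
    unfolding weak_identities_def by blast
  have Tc: "T_subgroup (carrier freeF)"
    unfolding T_subgroup_def using group.subgroup_self[OF freeF_group]
    by (auto simp: hom_in_carrier)
  have gen: "\<And>H. T_subgroup H \<Longrightarrow> S \<subseteq> H \<Longrightarrow> T_generated S \<subseteq> H"
    unfolding T_generated_def by blast
  have TS: "T_generated S \<subseteq> carrier freeF" using gen[OF Tc SF] .
  show ?thesis unfolding weak_identities_def
  proof (intro conjI exI[of _ N] allI impI ballI TS N)
    fix s :: "nat \<Rightarrow> fword" and \<rho>
    assume s: "\<forall>k\<in>{1..N}. s k \<in> T_generated S" and \<rho>: "\<rho> \<in> hom (freeF_pow N) G"
    show "\<exists>k\<in>{1..N}. \<rho> (freeF_incl N k (s k)) = \<one>\<^bsub>G\<^esub>"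
    proof (rule ccontr)
      assume ne: "\<not> (\<exists>k\<in>{1..N}. \<rho> (freeF_incl N k (s k)) = \<one>\<^bsub>G\<^esub>)"
      define V where "V k = {x \<in> carrier freeF. \<forall>\<phi>\<in>hom freeF freeF. \<rho> (freeF_incl N k (\<phi> x)) = \<one>\<^bsub>G\<^esub>}" for k
      have TV: "T_subgroup (V k)" if k: "k \<in> {1..N}" for k
      proof -
        have sg: "subgroup (V k) freeF"
        proof (rule group.subgroupI[OF freeF_group])
          show "V k \<subseteq> carrier freeF" by (auto simp: V_def)
          have "[] \<in> V k" using group_hom.hom_one[OF hh[OF assms(1) \<rho> k]] by (simp add: V_def)
          thus "V k \<noteq> {}" by blast
        next
          fix a assume a: "a \<in> V k"
          hence ac: "a \<in> carrier freeF" by (simp add: V_def)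
          show "inv\<^bsub>freeF\<^esub> a \<in> V k" unfolding V_def
          proof (intro CollectI conjI ballI)
            show "inv\<^bsub>freeF\<^esub> a \<in> carrier freeF" using ac freeF_group by simp
            fix \<phi> assume \<phi>: "\<phi> \<in> hom freeF freeF"
            have "\<rho> (freeF_incl N k (\<phi> a)) = \<one>\<^bsub>G\<^esub>" using a \<phi> by (simp add: V_def)
            thus "\<rho> (freeF_incl N k (\<phi> (inv\<^bsub>freeF\<^esub> a))) = \<one>\<^bsub>G\<^esub>"
              using group_hom.hom_inv[OF hh[OF assms(1) \<rho> k \<phi>] ac] monoid.inv_one[OF group.is_monoid[OF assms(1)]] by simp
          qed
        next
          fix a b assume a: "a \<in> V k" and b: "b \<in> V k"
          hence ac: "a \<in> carrier freeF" and bc: "b \<in> carrier freeF" by (simp_all add: V_def)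
          show "a \<otimes>\<^bsub>freeF\<^esub> b \<in> V k" unfolding V_def
          proof (intro CollectI conjI ballI)
            show "a \<otimes>\<^bsub>freeF\<^esub> b \<in> carrier freeF" using ac bc freeF_group by (simp add: group.is_monoid monoid.m_closed)
            fix \<phi> assume \<phi>: "\<phi> \<in> hom freeF freeF"
            have "\<rho> (freeF_incl N k (\<phi> a)) = \<one>\<^bsub>G\<^esub>" "\<rho> (freeF_incl N k (\<phi> b)) = \<one>\<^bsub>G\<^esub>"
              using a b \<phi> by (simp_all add: V_def)
            thus "\<rho> (freeF_incl N k (\<phi> (a \<otimes>\<^bsub>freeF\<^esub> b))) = \<one>\<^bsub>G\<^esub>"
              using group_hom.hom_mult[OF hh[OF assms(1) \<rho> k \<phi>] ac bc] monoid.l_one[OF group.is_monoid[OF assms(1)] monoid.one_closed[OF group.is_monoid[OF assms(1)]]] by simp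
          qed
        qed
        have "\<psi> ` V k \<subseteq> V k" if \<psi>: "\<psi> \<in> hom freeF freeF" for \<psi>
        proof
          fix y assume "y \<in> \<psi> ` V k"
          then obtain x where x: "x \<in> V k" "y = \<psi> x" by blast
          show "y \<in> V k" unfolding V_def
          proof (intro CollectI conjI ballI)
            show "y \<in> carrier freeF" using x \<psi> by (simp add: V_def hom_in_carrier)
            fix \<phi> assume "\<phi> \<in> hom freeF freeF"
            hence A: "(\<lambda>x. \<phi> (\<psi> x)) \<in> hom freeF freeF" using comp_hom \<psi> by blast
            have B: "\<forall>\<phi>\<in>hom freeF freeF. \<rho> (freeF_incl N k (\<phi> x)) = \<one>\<^bsub>G\<^esub>"
              using x by (simp add: V_def)
            show "\<rho> (freeF_incl N k (\<phi> y)) = \<one>\<^bsub>G\<^esub>" using bspec[OF B A] x(2) by simp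
          qed
        qed
        thus ?thesis using sg unfolding T_subgroup_def by blast
      qed
      have ex: "\<exists>t \<phi>. t \<in> S \<and> \<phi> \<in> hom freeF freeF \<and> \<rho> (freeF_incl N k (\<phi> t)) \<noteq> \<one>\<^bsub>G\<^esub>"
        if k: "k \<in> {1..N}" for k
      proof -
        have "s k \<notin> V k" using ne k id_hom by (auto simp: V_def)
        hence "\<not> S \<subseteq> V k" using gen[OF TV[OF k]] s k by blast
        then obtain t where "t \<in> S" "t \<notin> V k" by blast
        thus ?thesis using SF by (auto simp: V_def)
      qed
      then obtain t \<phi> where t: "\<And>k. k \<in> {1..N} \<Longrightarrow> t k \<in> S \<and> \<phi> k \<in> hom freeF freeF \<and> \<rho> (freeF_incl N k (\<phi> k (t k))) \<noteq> \<one>\<^bsub>G\<^esub>"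
        by metis
      define \<Phi> where "\<Phi> = (\<lambda>f. \<lambda>j\<in>{1..N}. \<phi> j (f j))"
      have "\<Phi> \<in> hom (freeF_pow N) (freeF_pow N)" unfolding \<Phi>_def using Phi_hom t by blast
      hence "\<rho> \<circ> \<Phi> \<in> hom (freeF_pow N) G" using \<rho> hom_compose by blast
      then obtain k where k: "k \<in> {1..N}" and eq: "(\<rho> \<circ> \<Phi>) (freeF_incl N k (t k)) = \<one>\<^bsub>G\<^esub>"
        using W t by blast
      have "\<Phi> (freeF_incl N k (t k)) = freeF_incl N k (\<phi> k (t k))"
        unfolding \<Phi>_def using Phi_incl t k by blast
      thus False using eq t[OF k] by simp
    qed
  qed
qed

end
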